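(* Let $A$ be a von Neumann algebra such that $\mathcal V(A)$ satisfies the descending chain condition: every chain $\cdots\subseteq C_3\subseteq C_2\subseteq C_1$ in $\mathcal V(A)$ stabilizes. Then the topological space $\Sigma^\ast$ is sober (every nonempty irreducible closed subset is the closure of a unique point). In particular, $\Sigma^\ast$ is sober whenever $A$ is finite-dimensional.
   Context: Let $A$ be a von Neumann algebra. $\mathcal{V}(A)$ denotes the set of abelian von Neumann subalgebras $C\subseteq A$ containing the unit of $A$, partially ordered by inclusion. For $C\in\mathcal V(A)$, $\Sigma_C$ denotes the Gelfand spectrum of $C$, with restriction maps $\lambda\mapsto\lambda|_D$ for $D\subseteq C$. Let $\Sigma=\{(C,\lambda)\mid C\in\mathcal V(A),\lambda\in\Sigma_C\}$ and $U_C=\{\lambda\mid(C,\lambda)\in U\}$ for $U\subseteq\Sigma$. The space $\Sigma^\ast$ is $\Sigma$ with the topology in which $U$ is open iff (1) each $U_C$ is open in $\Sigma_C$ and (2) $\lambda\in U_C$, $D\subseteq C$ imply $\lambda|_D\in U_D$. *)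

theory Defs
  imports "HOL-Analysis.Analysis"
begin

section \<open>Complex Hilbert spaces (carrier = the whole type 'h)\<close>

record 'h hspace =
  hadd   :: "'h \<Rightarrow> 'h \<Rightarrow> 'h"
  hscale :: "complex \<Rightarrow> 'h \<Rightarrow> 'h"
  hzero  :: "'h"
  hinner :: "'h \<Rightarrow> 'h \<Rightarrow> complex"

definition hnorm :: "'h hspace \<Rightarrow> 'h \<Rightarrow> real" where
  "hnorm H x = sqrt (Re (hinner H x x))"

definition hdiff :: "'h hspace \<Rightarrow> 'h \<Rightarrow> 'h \<Rightarrow> 'h" where
  "hdiff H x y = hadd H x (hscale H (-1) y)"

definition chilbert :: "'h hspace \<Rightarrow> bool" where
  "chilbert H \<longleftrightarrow>
     \<comment> \<open>complex vector space\<close>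
     (\<forall>x y z. hadd H (hadd H x y) z = hadd H x (hadd H y z)) \<and>
     (\<forall>x y. hadd H x y = hadd H y x) \<and>
     (\<forall>x. hadd H (hzero H) x = x) \<and>
     (\<forall>x. \<exists>y. hadd H x y = hzero H) \<and>
     (\<forall>a x y. hscale H a (hadd H x y) = hadd H (hscale H a x) (hscale H a y)) \<and>
     (\<forall>a b x. hscale H (a + b) x = hadd H (hscale H a x) (hscale H b x)) \<and>
     (\<forall>a b x. hscale H (a * b) x = hscale H a (hscale H b x)) \<and>
     (\<forall>x. hscale H 1 x = x) \<and>
     \<comment> \<open>inner product (linear in the first, conjugate-linear in the second argument)\<close>
     (\<forall>x y z. hinner H (hadd H x y) z = hinner H x z + hinner H y z) \<and>
     (\<forall>a x y. hinner H (hscale H a x) y = a * hinner H x y) \<and>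
     (\<forall>x y. hinner H y x = cnj (hinner H x y)) \<and>
     (\<forall>x. Re (hinner H x x) \<ge> 0) \<and>
     (\<forall>x. hinner H x x = 0 \<longrightarrow> x = hzero H) \<and>
     \<comment> \<open>completeness\<close>
     (\<forall>f :: nat \<Rightarrow> 'h.
        (\<forall>e>0. \<exists>N. \<forall>m\<ge>N. \<forall>n\<ge>N. hnorm H (hdiff H (f m) (f n)) < e) \<longrightarrow>
        (\<exists>x. (\<lambda>n. hnorm H (hdiff H (f n) x)) \<longlonglongrightarrow> 0))"

definition bop :: "'h hspace \<Rightarrow> ('h \<Rightarrow> 'h) set" where
  "bop H = {T. (\<forall>x y. T (hadd H x y) = hadd H (T x) (T y)) \<and>
               (\<forall>a x. T (hscale H a x) = hscale H a (T x)) \<and>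
               (\<exists>K. \<forall>x. hnorm H (T x) \<le> K * hnorm H x)}"

definition opadd :: "'h hspace \<Rightarrow> ('h \<Rightarrow> 'h) \<Rightarrow> ('h \<Rightarrow> 'h) \<Rightarrow> ('h \<Rightarrow> 'h)" where
  "opadd H S T = (\<lambda>x. hadd H (S x) (T x))"

definition opscale :: "'h hspace \<Rightarrow> complex \<Rightarrow> ('h \<Rightarrow> 'h) \<Rightarrow> ('h \<Rightarrow> 'h)" where
  "opscale H a T = (\<lambda>x. hscale H a (T x))"

definition adjoint :: "'h hspace \<Rightarrow> ('h \<Rightarrow> 'h) \<Rightarrow> ('h \<Rightarrow> 'h)" where
  "adjoint H T = (THE S. S \<in> bop H \<and> (\<forall>x y. hinner H (T x) y = hinner H x (S y)))"

definition commutant :: "'h hspace \<Rightarrow> ('h \<Rightarrow> 'h) set \<Rightarrow> ('h \<Rightarrow> 'h) set" where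
  "commutant H X = {T \<in> bop H. \<forall>S\<in>X. T \<circ> S = S \<circ> T}"

text \<open>A von Neumann algebra on H: a self-adjoint set of bounded operators equal to its
  double commutant (equivalently, a unital WOT-closed *-subalgebra of B(H)).\<close>
definition von_neumann_algebra :: "'h hspace \<Rightarrow> ('h \<Rightarrow> 'h) set \<Rightarrow> bool" where
  "von_neumann_algebra H M \<longleftrightarrow>
     M \<subseteq> bop H \<and> (\<forall>T\<in>M. adjoint H T \<in> M) \<and> commutant H (commutant H M) = M"

definition VA :: "'h hspace \<Rightarrow> ('h \<Rightarrow> 'h) set \<Rightarrow> ('h \<Rightarrow> 'h) set set" where
  "VA H A = {C. C \<subseteq> A \<and> von_neumann_algebra H C \<and> id \<in> C \<and>
                (\<forall>S\<in>C. \<forall>T\<in>C. S \<circ> T = T \<circ> S)}"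

inductive_set cspan :: "'h hspace \<Rightarrow> ('h \<Rightarrow> 'h) set \<Rightarrow> ('h \<Rightarrow> 'h) set"
  for H B where
  zero: "(\<lambda>x. hzero H) \<in> cspan H B"
| step: "b \<in> B \<Longrightarrow> T \<in> cspan H B \<Longrightarrow> opadd H (opscale H c b) T \<in> cspan H B"

definition finite_dimensional :: "'h hspace \<Rightarrow> ('h \<Rightarrow> 'h) set \<Rightarrow> bool" where
  "finite_dimensional H A \<longleftrightarrow> (\<exists>B. finite B \<and> B \<subseteq> A \<and> A \<subseteq> cspan H B)"

definition dcc_VA :: "'h hspace \<Rightarrow> ('h \<Rightarrow> 'h) set \<Rightarrow> bool" where
  "dcc_VA H A \<longleftrightarrow>
     (\<forall>Cs :: nat \<Rightarrow> ('h \<Rightarrow> 'h) set.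
        (\<forall>n. Cs n \<in> VA H A \<and> Cs (Suc n) \<subseteq> Cs n) \<longrightarrow> (\<exists>N. \<forall>n\<ge>N. Cs n = Cs N))"

text \<open>Characters of C (nonzero multiplicative linear functionals), as extensional
  functions on C; topologised with the weak-* topology (pointwise convergence on C).\<close>
definition gelfand :: "'h hspace \<Rightarrow> ('h \<Rightarrow> 'h) set \<Rightarrow> (('h \<Rightarrow> 'h) \<Rightarrow> complex) set" where
  "gelfand H C = {l \<in> extensional C.
      (\<forall>S\<in>C. \<forall>T\<in>C. l (opadd H S T) = l S + l T) \<and>
      (\<forall>a. \<forall>T\<in>C. l (opscale H a T) = a * l T) \<and>
      (\<forall>S\<in>C. \<forall>T\<in>C. l (S \<circ> T) = l S * l T) \<and>
      l id = 1}"

definition gelfand_top :: "'h hspace \<Rightarrow> ('h \<Rightarrow> 'h) set \<Rightarrow> (('h \<Rightarrow> 'h) \<Rightarrow> complex) topology" where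
  "gelfand_top H C = subtopology (product_topology (\<lambda>_. euclidean) C) (gelfand H C)"

definition Sigma_set :: "'h hspace \<Rightarrow> ('h \<Rightarrow> 'h) set
     \<Rightarrow> (('h \<Rightarrow> 'h) set \<times> (('h \<Rightarrow> 'h) \<Rightarrow> complex)) set" where
  "Sigma_set H A = (SIGMA C:VA H A. gelfand H C)"

definition slice :: "('c \<times> 'l) set \<Rightarrow> 'c \<Rightarrow> 'l set" where
  "slice U C = {l. (C, l) \<in> U}"

definition sigma_open :: "'h hspace \<Rightarrow> ('h \<Rightarrow> 'h) set
     \<Rightarrow> (('h \<Rightarrow> 'h) set \<times> (('h \<Rightarrow> 'h) \<Rightarrow> complex)) set \<Rightarrow> bool" where
  "sigma_open H A U \<longleftrightarrow>
     U \<subseteq> Sigma_set H A \<and>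
     (\<forall>C\<in>VA H A. openin (gelfand_top H C) (slice U C)) \<and>
     (\<forall>C l D. (C, l) \<in> U \<longrightarrow> D \<in> VA H A \<longrightarrow> D \<subseteq> C \<longrightarrow> (D, restrict l D) \<in> U)"

lemma sigma_openI:
  assumes "U \<subseteq> Sigma_set H A"
    and "\<And>C. C \<in> VA H A \<Longrightarrow> openin (gelfand_top H C) (slice U C)"
    and "\<And>C l D. (C, l) \<in> U \<Longrightarrow> D \<in> VA H A \<Longrightarrow> D \<subseteq> C \<Longrightarrow> (D, restrict l D) \<in> U"
  shows "sigma_open H A U"
  unfolding sigma_open_def
  by (intro conjI ballI allI impI assms(1)) (simp_all add: assms(2,3))

lemma sigma_openD:
  assumes "sigma_open H A U"
  shows "U \<subseteq> Sigma_set H A"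
    and "\<And>C. C \<in> VA H A \<Longrightarrow> openin (gelfand_top H C) (slice U C)"
    and "\<And>C l D. (C, l) \<in> U \<Longrightarrow> D \<in> VA H A \<Longrightarrow> D \<subseteq> C \<Longrightarrow> (D, restrict l D) \<in> U"
  using assms unfolding sigma_open_def by simp_all

lemma istopology_sigma_open: "istopology (sigma_open H A)"
  unfolding istopology_def
proof (intro conjI allI impI)
  fix S T assume S: "sigma_open H A S" and T: "sigma_open H A T"
  show "sigma_open H A (S \<inter> T)"
  proof (rule sigma_openI)
    show "S \<inter> T \<subseteq> Sigma_set H A" using sigma_openD(1)[OF S] by fast
  next
    fix C assume C: "C \<in> VA H A"
    have e: "slice (S \<inter> T) C = slice S C \<inter> slice T C" by (auto simp: slice_def)
    show "openin (gelfand_top H C) (slice (S \<inter> T) C)"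
      unfolding e by (rule openin_Int[OF sigma_openD(2)[OF S C] sigma_openD(2)[OF T C]])
  next
    fix C l D assume "(C, l) \<in> S \<inter> T" "D \<in> VA H A" "D \<subseteq> C"
    then show "(D, restrict l D) \<in> S \<inter> T"
      using sigma_openD(3)[OF S] sigma_openD(3)[OF T] by fast
  qed
next
  fix K assume K: "\<forall>S\<in>K. sigma_open H A S"
  show "sigma_open H A (\<Union>K)"
  proof (rule sigma_openI)
    show "\<Union>K \<subseteq> Sigma_set H A" using K sigma_openD(1) by fast
  next
    fix C assume C: "C \<in> VA H A"
    have e: "slice (\<Union>K) C = \<Union> ((\<lambda>S. slice S C) ` K)" by (auto simp: slice_def)
    show "openin (gelfand_top H C) (slice (\<Union>K) C)"
      unfolding e by (rule openin_Union) (use K sigma_openD(2)[OF _ C] in fast)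
  next
    fix C l D assume "(C, l) \<in> \<Union>K" "D \<in> VA H A" "D \<subseteq> C"
    then show "(D, restrict l D) \<in> \<Union>K"
      using K sigma_openD(3) by fast
  qed
qed

definition Sigma_star :: "'h hspace \<Rightarrow> ('h \<Rightarrow> 'h) set
     \<Rightarrow> (('h \<Rightarrow> 'h) set \<times> (('h \<Rightarrow> 'h) \<Rightarrow> complex)) topology" where
  "Sigma_star H A = topology (sigma_open H A)"

lemma openin_Sigma_star: "openin (Sigma_star H A) U \<longleftrightarrow> sigma_open H A U"
  by (simp add: Sigma_star_def istopology_sigma_open)

definition irreducible_in :: "'a topology \<Rightarrow> 'a set \<Rightarrow> bool" where
  "irreducible_in X F \<longleftrightarrow> F \<subseteq> topspace X \<and> F \<noteq> {} \<and>
     (\<forall>F1 F2. closedin X F1 \<longrightarrow> closedin X F2 \<longrightarrow> F \<subseteq> F1 \<union> F2 \<longrightarrow> F \<subseteq> F1 \<or> F \<subseteq> F2)"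

definition sober :: "'a topology \<Rightarrow> bool" where
  "sober X \<longleftrightarrow>
     (\<forall>F. closedin X F \<longrightarrow> irreducible_in X F \<longrightarrow>
        (\<exists>!x. x \<in> topspace X \<and> F = X closure_of {x}))"

end

theory Submission
  imports Defs "HOL-Library.Function_Algebras"
begin


locale hil =
  fixes H :: "'h hspace"
  assumes ch: "chilbert H"
begin

lemma chd: "(\<forall>x y z. hadd H (hadd H x y) z = hadd H x (hadd H y z)) \<and>
     (\<forall>x y. hadd H x y = hadd H y x) \<and>
     (\<forall>x. hadd H (hzero H) x = x) \<and>
     (\<forall>x. \<exists>y. hadd H x y = hzero H) \<and>
     (\<forall>a x y. hscale H a (hadd H x y) = hadd H (hscale H a x) (hscale H a y)) \<and>
     (\<forall>a b x. hscale H (a + b) x = hadd H (hscale H a x) (hscale H b x)) \<and>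
     (\<forall>a b x. hscale H (a * b) x = hscale H a (hscale H b x)) \<and>
     (\<forall>x. hscale H 1 x = x) \<and>
     (\<forall>x y z. hinner H (hadd H x y) z = hinner H x z + hinner H y z) \<and>
     (\<forall>a x y. hinner H (hscale H a x) y = a * hinner H x y) \<and>
     (\<forall>x y. hinner H y x = cnj (hinner H x y)) \<and>
     (\<forall>x. Re (hinner H x x) \<ge> 0)"
  using ch unfolding chilbert_def by (elim conjE) (intro conjI)

lemma hadd_assoc: "hadd H (hadd H x y) z = hadd H x (hadd H y z)"
  using chd[THEN conjunct1] by blast
lemma hadd_comm: "hadd H x y = hadd H y x"
  using chd[THEN conjunct2, THEN conjunct1] by blast
lemma hadd_0l[simp]: "hadd H (hzero H) x = x"
  using chd[THEN conjunct2, THEN conjunct2, THEN conjunct1] by blast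
lemma hadd_0r[simp]: "hadd H x (hzero H) = x"
  using hadd_comm hadd_0l by metis
lemma hadd_inv: "\<exists>y. hadd H x y = hzero H"
  using chd[THEN conjunct2, THEN conjunct2, THEN conjunct2, THEN conjunct1] by blast
lemma hscale_addr: "hscale H a (hadd H x y) = hadd H (hscale H a x) (hscale H a y)"
  using chd[THEN conjunct2, THEN conjunct2, THEN conjunct2, THEN conjunct2, THEN conjunct1] by blast
lemma hscale_addl: "hscale H (a + b) x = hadd H (hscale H a x) (hscale H b x)"
  using chd[THEN conjunct2, THEN conjunct2, THEN conjunct2, THEN conjunct2, THEN conjunct2, THEN conjunct1] by blast
lemma hscale_mult: "hscale H (a * b) x = hscale H a (hscale H b x)"
  using chd[THEN conjunct2, THEN conjunct2, THEN conjunct2, THEN conjunct2, THEN conjunct2, THEN conjunct2, THEN conjunct1] by blast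
lemma hscale_1[simp]: "hscale H 1 x = x"
  using chd[THEN conjunct2, THEN conjunct2, THEN conjunct2, THEN conjunct2, THEN conjunct2, THEN conjunct2, THEN conjunct2, THEN conjunct1] by blast
lemma hinner_addl: "hinner H (hadd H x y) z = hinner H x z + hinner H y z"
  using chd[THEN conjunct2, THEN conjunct2, THEN conjunct2, THEN conjunct2, THEN conjunct2, THEN conjunct2, THEN conjunct2, THEN conjunct2, THEN conjunct1] by blast
lemma hinner_scalel: "hinner H (hscale H a x) y = a * hinner H x y"
  using chd[THEN conjunct2, THEN conjunct2, THEN conjunct2, THEN conjunct2, THEN conjunct2, THEN conjunct2, THEN conjunct2, THEN conjunct2, THEN conjunct2, THEN conjunct1] by blast
lemma hinner_sym: "hinner H y x = cnj (hinner H x y)"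
  using chd[THEN conjunct2, THEN conjunct2, THEN conjunct2, THEN conjunct2, THEN conjunct2, THEN conjunct2, THEN conjunct2, THEN conjunct2, THEN conjunct2, THEN conjunct2, THEN conjunct1] by blast
lemma hinner_pos: "Re (hinner H x x) \<ge> 0"
  using chd[THEN conjunct2, THEN conjunct2, THEN conjunct2, THEN conjunct2, THEN conjunct2, THEN conjunct2, THEN conjunct2, THEN conjunct2, THEN conjunct2, THEN conjunct2, THEN conjunct2] by blast

lemma hadd_cancel: assumes "hadd H u v = hadd H u w" shows "v = w"
proof -
  obtain y where y: "hadd H u y = hzero H" using hadd_inv by blast
  have "hadd H y (hadd H u v) = hadd H y (hadd H u w)" using assms by simp
  then show ?thesis using y by (metis hadd_assoc hadd_comm hadd_0l)
qed

lemma hscale_0[simp]: "hscale H 0 x = hzero H"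
proof -
  have "hadd H (hscale H 0 x) (hscale H 0 x) = hadd H (hscale H 0 x) (hzero H)"
    using hscale_addl[of 0 0 x] by simp
  then show ?thesis by (rule hadd_cancel)
qed

lemma hscale_zero[simp]: "hscale H a (hzero H) = hzero H"
  by (metis hscale_0 hscale_mult mult_zero_right)

lemma hinner_addr: "hinner H x (hadd H y z) = hinner H x y + hinner H x z"
  by (metis hinner_sym hinner_addl complex_cnj_add)
lemma hinner_scaler: "hinner H x (hscale H a y) = cnj a * hinner H x y"
  by (metis hinner_sym hinner_scalel complex_cnj_mult)

lemma hnorm_nonneg: "hnorm H x \<ge> 0"
  using hinner_pos[of x] by (simp add: hnorm_def)

lemma hnorm_sq: "(hnorm H x)^2 = Re (hinner H x x)"
  by (simp add: hnorm_def hinner_pos)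

lemma hnorm_scale: "hnorm H (hscale H a x) = cmod a * hnorm H x"
proof -
  have "hinner H (hscale H a x) (hscale H a x) = (a * cnj a) * hinner H x x"
    by (simp add: hinner_scalel hinner_scaler)
  also have "a * cnj a = complex_of_real ((cmod a)^2)"
    by (metis complex_norm_square of_real_power)
  finally have "Re (hinner H (hscale H a x) (hscale H a x)) = (cmod a)^2 * Re (hinner H x x)"
    by simp
  then show ?thesis unfolding hnorm_def by (simp add: real_sqrt_mult)
qed

lemma hnorm_add_sq: "(hnorm H (hadd H x y))^2 \<le> 2 * (hnorm H x)^2 + 2 * (hnorm H y)^2"
proof -
  let ?m = "hscale H (-1) y"
  have e1: "hinner H (hadd H x y) (hadd H x y) =
     hinner H x x + hinner H x y + hinner H y x + hinner H y y"
    by (simp add: hinner_addl hinner_addr)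
  have e2: "hinner H (hadd H x ?m) (hadd H x ?m) =
     hinner H x x - hinner H x y - hinner H y x + hinner H y y"
    by (simp add: hinner_addl hinner_addr hinner_scalel hinner_scaler)
  have "Re (hinner H (hadd H x ?m) (hadd H x ?m)) \<ge> 0" by (rule hinner_pos)
  then show ?thesis unfolding hnorm_sq using e1 e2 by simp
qed

lemma hnorm_zero[simp]: "hnorm H (hzero H) = 0"
  using hnorm_scale[of 0 "hzero H"] by simp


lemma bop_zero: "T \<in> bop H \<Longrightarrow> T (hzero H) = hzero H"
  unfolding bop_def by (metis (mono_tags, lifting) hscale_0 mem_Collect_eq)

lemma bound_nonneg:
  assumes "\<forall>x. hnorm H (T x) \<le> K * hnorm H x"
  shows "\<forall>x. hnorm H (T x) \<le> max K 0 * hnorm H x"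
  using assms hnorm_nonneg by (meson max.cobounded1 mult_right_mono order_trans)

lemma bop_opadd: assumes "S \<in> bop H" "T \<in> bop H" shows "opadd H S T \<in> bop H"
proof -
  obtain K1 where K1: "\<forall>x. hnorm H (S x) \<le> max K1 0 * hnorm H x"
    using assms(1) bound_nonneg unfolding bop_def by blast
  obtain K2 where K2: "\<forall>x. hnorm H (T x) \<le> max K2 0 * hnorm H x"
    using assms(2) bound_nonneg unfolding bop_def by blast
  have b: "hnorm H (opadd H S T x) \<le> sqrt (2 * (max K1 0)^2 + 2 * (max K2 0)^2) * hnorm H x" for x
  proof -
    have s1: "(hnorm H (S x))^2 \<le> (max K1 0 * hnorm H x)^2"
      using K1 hnorm_nonneg by (meson power_mono)
    have s2: "(hnorm H (T x))^2 \<le> (max K2 0 * hnorm H x)^2"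
      using K2 hnorm_nonneg by (meson power_mono)
    have "(hnorm H (opadd H S T x))^2 \<le> 2 * (hnorm H (S x))^2 + 2 * (hnorm H (T x))^2"
      unfolding opadd_def by (rule hnorm_add_sq)
    also have "\<dots> \<le> (2 * (max K1 0)^2 + 2 * (max K2 0)^2) * (hnorm H x)^2"
      using s1 s2 by (simp add: power_mult_distrib algebra_simps)
    finally have "(hnorm H (opadd H S T x))^2 \<le> (sqrt (2 * (max K1 0)^2 + 2 * (max K2 0)^2) * hnorm H x)^2"
      by (simp add: power_mult_distrib)
    moreover have "0 \<le> sqrt (2 * (max K1 0)^2 + 2 * (max K2 0)^2) * hnorm H x"
      by (simp add: hnorm_nonneg)
    ultimately show ?thesis by (rule power2_le_imp_le)
  qed
  have "opadd H S T (hadd H x y) = hadd H (opadd H S T x) (opadd H S T y)" for x y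
    using assms unfolding bop_def opadd_def by (simp add: hadd_assoc) (metis hadd_assoc hadd_comm)
  moreover have "opadd H S T (hscale H a x) = hscale H a (opadd H S T x)" for a x
    using assms unfolding bop_def opadd_def by (simp add: hscale_addr)
  ultimately show ?thesis using b unfolding bop_def by blast
qed

lemma bop_opscale: assumes "T \<in> bop H" shows "opscale H a T \<in> bop H"
proof -
  obtain K where K: "\<forall>x. hnorm H (T x) \<le> max K 0 * hnorm H x"
    using assms bound_nonneg unfolding bop_def by blast
  have "hnorm H (opscale H a T x) \<le> (cmod a * max K 0) * hnorm H x" for x
    unfolding opscale_def hnorm_scale using K by (simp add: mult.assoc mult_left_mono)
  moreover have "opscale H a T (hadd H x y) = hadd H (opscale H a T x) (opscale H a T y)" for x y
    using assms unfolding bop_def opscale_def by (simp add: hscale_addr)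
  moreover have "opscale H a T (hscale H b x) = hscale H b (opscale H a T x)" for b x
    using assms unfolding bop_def opscale_def by (simp flip: hscale_mult add: mult.commute)
  ultimately show ?thesis unfolding bop_def by blast
qed

lemma bop_comp: assumes "S \<in> bop H" "T \<in> bop H" shows "S \<circ> T \<in> bop H"
proof -
  obtain K1 where K1: "\<forall>x. hnorm H (S x) \<le> max K1 0 * hnorm H x"
    using assms(1) bound_nonneg unfolding bop_def by blast
  obtain K2 where K2: "\<forall>x. hnorm H (T x) \<le> max K2 0 * hnorm H x"
    using assms(2) bound_nonneg unfolding bop_def by blast
  have "hnorm H ((S \<circ> T) x) \<le> (max K1 0 * max K2 0) * hnorm H x" for x
  proof -
    have "hnorm H (S (T x)) \<le> max K1 0 * hnorm H (T x)" using K1 by blast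
    also have "\<dots> \<le> max K1 0 * (max K2 0 * hnorm H x)" using K2 by (simp add: mult_left_mono)
    finally show ?thesis by (simp add: mult.assoc)
  qed
  then show ?thesis using assms unfolding bop_def by auto
qed

lemma bop_zero_op: "(\<lambda>x. hzero H) \<in> bop H"
  unfolding bop_def using hnorm_nonneg by (auto intro!: exI[of _ 0])

lemma commutant_opadd:
  assumes "X \<subseteq> bop H" "S \<in> commutant H X" "T \<in> commutant H X"
  shows "opadd H S T \<in> commutant H X"
proof -
  have "opadd H S T \<circ> R = R \<circ> opadd H S T" if "R \<in> X" for R
  proof -
    have c: "S \<circ> R = R \<circ> S" "T \<circ> R = R \<circ> T" using assms that unfolding commutant_def by auto
    have "R \<in> bop H" using assms that by auto
    then have add: "\<And>x y. R (hadd H x y) = hadd H (R x) (R y)" unfolding bop_def by blast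
    show ?thesis using c add unfolding opadd_def fun_eq_iff comp_def by simp
  qed
  then show ?thesis using assms bop_opadd unfolding commutant_def by auto
qed

lemma commutant_opscale:
  assumes "X \<subseteq> bop H" "T \<in> commutant H X"
  shows "opscale H a T \<in> commutant H X"
proof -
  have "opscale H a T \<circ> R = R \<circ> opscale H a T" if "R \<in> X" for R
  proof -
    have c: "T \<circ> R = R \<circ> T" using assms that unfolding commutant_def by auto
    have "R \<in> bop H" using assms that by auto
    then have sc: "\<And>a x. R (hscale H a x) = hscale H a (R x)" unfolding bop_def by blast
    show ?thesis using c sc unfolding opscale_def fun_eq_iff comp_def by simp
  qed
  then show ?thesis using assms bop_opscale unfolding commutant_def by auto
qed

lemma commutant_comp:
  assumes "S \<in> commutant H X" "T \<in> commutant H X"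
  shows "S \<circ> T \<in> commutant H X"
proof -
  have "(S \<circ> T) \<circ> R = R \<circ> (S \<circ> T)" if "R \<in> X" for R
  proof -
    have c: "S \<circ> R = R \<circ> S" "T \<circ> R = R \<circ> T" using assms that unfolding commutant_def by auto
    then show ?thesis by (metis comp_assoc)
  qed
  then show ?thesis using assms bop_comp unfolding commutant_def by auto
qed

lemma commutant_zero:
  assumes "X \<subseteq> bop H"
  shows "(\<lambda>x. hzero H) \<in> commutant H X"
  using assms bop_zero_op unfolding commutant_def by (auto simp: fun_eq_iff) (metis bop_zero subsetD)

lemma commutant_sub: "commutant H X \<subseteq> bop H"
  unfolding commutant_def by auto

lemma vna_closed:
  assumes "von_neumann_algebra H M"
  shows "S \<in> M \<Longrightarrow> T \<in> M \<Longrightarrow> opadd H S T \<in> M"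
    and "T \<in> M \<Longrightarrow> opscale H a T \<in> M"
    and "S \<in> M \<Longrightarrow> T \<in> M \<Longrightarrow> S \<circ> T \<in> M"
    and "(\<lambda>x. hzero H) \<in> M"
  using assms commutant_opadd[where X="commutant H M", OF commutant_sub]
    commutant_opscale[where X="commutant H M", OF commutant_sub]
    commutant_comp[where X="commutant H M"]
    commutant_zero[where X="commutant H M", OF commutant_sub]
  unfolding von_neumann_algebra_def by auto

lemma restrict_gelfand:
  assumes "D \<in> VA H A" "l \<in> gelfand H C" "D \<subseteq> C"
  shows "restrict l D \<in> gelfand H D"
proof -
  have v: "von_neumann_algebra H D" "id \<in> D" using assms(1) unfolding VA_def by auto
  show ?thesis using assms(2,3) vna_closed[OF v(1)] v(2) unfolding gelfand_def
    by (auto simp: subset_iff)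
qed


lemma gelfand_ext: "gelfand H C \<subseteq> extensional C"
  unfolding gelfand_def by auto

lemma topspace_gelfand[simp]: "topspace (gelfand_top H C) = gelfand H C"
  unfolding gelfand_top_def using gelfand_ext by (auto simp: PiE_def)

lemma mem_Sigma: "(C, l) \<in> Sigma_set H A \<longleftrightarrow> C \<in> VA H A \<and> l \<in> gelfand H C"
  unfolding Sigma_set_def by auto

lemma sigma_open_Sigma: "sigma_open H A (Sigma_set H A)"
proof (rule sigma_openI)
  fix C assume "C \<in> VA H A"
  then have "slice (Sigma_set H A) C = topspace (gelfand_top H C)"
    by (auto simp: slice_def mem_Sigma)
  then show "openin (gelfand_top H C) (slice (Sigma_set H A) C)" by (simp only: openin_topspace)
next
  fix C l D assume "(C, l) \<in> Sigma_set H A" "D \<in> VA H A" "D \<subseteq> C"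
  then show "(D, restrict l D) \<in> Sigma_set H A"
    unfolding mem_Sigma using restrict_gelfand by blast
qed (simp)

lemma topspace_Sigma_star: "topspace (Sigma_star H A) = Sigma_set H A"
proof
  show "topspace (Sigma_star H A) \<subseteq> Sigma_set H A"
    unfolding topspace_def openin_Sigma_star using sigma_openD(1) by blast
  show "Sigma_set H A \<subseteq> topspace (Sigma_star H A)"
    using sigma_open_Sigma openin_subset openin_Sigma_star by metis
qed

lemma cont_restrict:
  assumes "C \<in> VA H A" "C \<subseteq> E"
  shows "continuous_map (gelfand_top H E) (gelfand_top H C) (\<lambda>\<mu>. restrict \<mu> C)"
  unfolding gelfand_top_def continuous_map_in_subtopology
proof
  show "continuous_map (subtopology (product_topology (\<lambda>_. euclidean) E) (gelfand H E))
     (product_topology (\<lambda>_. euclidean) C) (\<lambda>\<mu>. restrict \<mu> C)"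
    unfolding continuous_map_componentwise
  proof
    show "(\<lambda>\<mu>. restrict \<mu> C) ` topspace (subtopology (product_topology (\<lambda>_. euclidean) E) (gelfand H E)) \<subseteq> extensional C"
      by auto
    show "\<forall>k\<in>C. continuous_map (subtopology (product_topology (\<lambda>_. euclidean) E) (gelfand H E))
        euclidean (\<lambda>x. restrict x C k)"
    proof
      fix k assume k: "k \<in> C"
      then have "continuous_map (subtopology (product_topology (\<lambda>_. euclidean) E) (gelfand H E))
        euclidean (\<lambda>x. x k)"
        using assms by (intro continuous_map_from_subtopology continuous_map_product_projection) auto
      then show "continuous_map (subtopology (product_topology (\<lambda>_. euclidean) E) (gelfand H E))
        euclidean (\<lambda>x. restrict x C k)" using k by simp
    qed
  qed
  show "(\<lambda>\<mu>. restrict \<mu> C) \<in> topspace (subtopology (product_topology (\<lambda>_. euclidean) E) (gelfand H E)) \<rightarrow> gelfand H C"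
    using assms restrict_gelfand topspace_gelfand unfolding gelfand_top_def by auto
qed

lemma Hausdorff_gelfand: "Hausdorff_space (gelfand_top H C)"
  unfolding gelfand_top_def
  by (rule Hausdorff_space_subtopology) (metis Hausdorff_space_euclidean Hausdorff_space_product_topology)

end


context hil
begin
lemma slice_Un: "slice (U \<union> V) C = slice U C \<union> slice V C"
  by (auto simp: slice_def)

lemma open_fst:
  assumes W: "sigma_open H A W"
    and P: "\<And>C D. P C \<Longrightarrow> D \<in> VA H A \<Longrightarrow> D \<subseteq> C \<Longrightarrow> P D"
  shows "sigma_open H A (W \<union> {p \<in> Sigma_set H A. P (fst p)})"
proof (rule sigma_openI)
  show "W \<union> {p \<in> Sigma_set H A. P (fst p)} \<subseteq> Sigma_set H A"
    using sigma_openD(1)[OF W] by auto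
next
  fix C assume C: "C \<in> VA H A"
  have T: "openin (gelfand_top H C) (gelfand H C)"
    using openin_topspace[of "gelfand_top H C"] by (simp only: topspace_gelfand)
  have "openin (gelfand_top H C) (slice {p \<in> Sigma_set H A. P (fst p)} C)"
  proof (cases "P C")
    case True
    then have "slice {p \<in> Sigma_set H A. P (fst p)} C = gelfand H C"
      using C by (auto simp: slice_def mem_Sigma)
    then show ?thesis using T by simp
  next
    case False
    then have "slice {p \<in> Sigma_set H A. P (fst p)} C = {}"
      by (auto simp: slice_def)
    then show ?thesis by simp
  qed
  then show "openin (gelfand_top H C) (slice (W \<union> {p \<in> Sigma_set H A. P (fst p)}) C)"
    unfolding slice_Un using sigma_openD(2)[OF W C] by (rule openin_Un[rotated])
next
  fix C l D assume "(C, l) \<in> W \<union> {p \<in> Sigma_set H A. P (fst p)}" "D \<in> VA H A" "D \<subseteq> C"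
  then consider "(C, l) \<in> W" | "(C, l) \<in> Sigma_set H A" "P C" by (simp only: Un_iff mem_Collect_eq fst_conv) blast
  then show "(D, restrict l D) \<in> W \<union> {p \<in> Sigma_set H A. P (fst p)}"
  proof cases
    case 1
    show ?thesis by (rule UnI1) (rule sigma_openD(3)[OF W 1 \<open>D \<in> VA H A\<close> \<open>D \<subseteq> C\<close>])
  next
    case 2
    have S: "(D, restrict l D) \<in> Sigma_set H A"
    proof -
      have lC: "l \<in> gelfand H C" using 2(1) unfolding mem_Sigma by blast
      show ?thesis unfolding mem_Sigma
        using restrict_gelfand[OF \<open>D \<in> VA H A\<close> lC \<open>D \<subseteq> C\<close>] \<open>D \<in> VA H A\<close> by blast
    qed
    have PD: "P D" by (rule P[OF 2(2) \<open>D \<in> VA H A\<close> \<open>D \<subseteq> C\<close>])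
    have "(D, restrict l D) \<in> {p \<in> Sigma_set H A. P (fst p)}"
      unfolding mem_Collect_eq fst_conv using S PD by (rule conjI)
    then show ?thesis by (rule UnI2)
  qed
qed

end



lemma dcc_min:
  assumes dcc: "dcc_VA H A" and MV: "M \<subseteq> VA H A" and Mne: "M \<noteq> {}"
  shows "\<exists>C\<in>M. \<forall>D\<in>M. D \<subseteq> C \<longrightarrow> D = C"
proof (rule ccontr)
  assume "\<not> ?thesis"
  then have "\<forall>C\<in>M. \<exists>D. D \<in> M \<and> D \<subseteq> C \<and> D \<noteq> C" by blast
  then obtain g where g: "\<And>C. C \<in> M \<Longrightarrow> g C \<in> M \<and> g C \<subseteq> C \<and> g C \<noteq> C" by metis
  obtain C0 where C0: "C0 \<in> M" using Mne by blast
  define Cs where "Cs n = (g ^^ n) C0" for n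
  have CsM: "Cs n \<in> M" for n
    by (induction n) (simp_all add: Cs_def C0 g)
  have step: "Cs (Suc n) = g (Cs n)" for n by (simp add: Cs_def)
  have h: "\<forall>n. Cs n \<in> VA H A \<and> Cs (Suc n) \<subseteq> Cs n"
    using CsM MV g step by auto
  have "(\<forall>n. Cs n \<in> VA H A \<and> Cs (Suc n) \<subseteq> Cs n) \<longrightarrow> (\<exists>N. \<forall>n\<ge>N. Cs n = Cs N)"
    using dcc unfolding dcc_VA_def by (rule spec)
  then have "\<exists>N. \<forall>n\<ge>N. Cs n = Cs N" using h by (rule mp)
  then obtain N where "\<forall>n\<ge>N. Cs n = Cs N" ..
  then have "Cs (Suc N) = Cs N" by (erule_tac x="Suc N" in allE) simp
  then show False using g[OF CsM[of N]] step by simp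
qed

context hil
begin

lemma sigma_open_empty: "sigma_open H A {}"
  by (rule sigma_openI) (auto simp: slice_def)

lemma closedI:
  assumes "G \<subseteq> Sigma_set H A" "sigma_open H A (Sigma_set H A - G)"
  shows "closedin (Sigma_star H A) G"
  unfolding closedin_def topspace_Sigma_star openin_Sigma_star using assms by blast

lemma sober_min:
  assumes minp: "\<And>M. M \<subseteq> VA H A \<Longrightarrow> M \<noteq> {} \<Longrightarrow> \<exists>C\<in>M. \<forall>D\<in>M. D \<subseteq> C \<longrightarrow> D = C"
  shows "sober (Sigma_star H A)"
  unfolding sober_def
proof (intro allI impI)
  fix F
  assume Fc: "closedin (Sigma_star H A) F" and Fi: "irreducible_in (Sigma_star H A) F"
  define S where "S = Sigma_set H A"
  define X where "X = Sigma_star H A"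
  have FS: "F \<subseteq> S" using closedin_subset[OF Fc] topspace_Sigma_star S_def by blast
  define W where "W = S - F"
  have Wo: "sigma_open H A W"
    using Fc unfolding closedin_def topspace_Sigma_star openin_Sigma_star W_def S_def by blast
  have WS: "W \<subseteq> S" unfolding W_def by blast
  have Fne: "F \<noteq> {}" using Fi unfolding irreducible_in_def by blast
  have irr: "\<And>F1 F2. closedin X F1 \<Longrightarrow> closedin X F2 \<Longrightarrow> F \<subseteq> F1 \<union> F2 \<Longrightarrow> F \<subseteq> F1 \<or> F \<subseteq> F2"
    using Fi unfolding irreducible_in_def X_def by blast
  have clO: "closedin X (S - Ox)" if "sigma_open H A Ox" for Ox
  proof -
    have "Ox \<subseteq> S" using sigma_openD(1)[OF that] S_def by simp
    then have "S - (S - Ox) = Ox" by blast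
    then show ?thesis unfolding X_def using closedI[of "S - Ox"] that S_def by auto
  qed
  have memS: "\<And>E \<mu>. (E, \<mu>) \<in> S \<longleftrightarrow> E \<in> VA H A \<and> \<mu> \<in> gelfand H E"
    unfolding S_def by (rule mem_Sigma)
  define M where "M = fst ` F"
  have MV: "M \<subseteq> VA H A" using FS memS unfolding M_def by force
  have Mne: "M \<noteq> {}" using Fne unfolding M_def by blast
  obtain C1 where C1M: "C1 \<in> M" and C1min: "\<And>D. D \<in> M \<Longrightarrow> D \<subseteq> C1 \<Longrightarrow> D = C1"
    using minp[OF MV Mne] by blast
  obtain lam where C1F: "(C1, lam) \<in> F" using C1M unfolding M_def by force
  have C1V: "C1 \<in> VA H A" using C1M MV by blast
  have lamG: "lam \<in> gelfand H C1" using C1F FS memS by blast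
  have stepA: "\<And>E \<mu>. (E, \<mu>) \<in> F \<Longrightarrow> C1 \<subseteq> E"
  proof -
    define O1 where "O1 = W \<union> {p \<in> S. \<not> C1 \<subseteq> fst p}"
    define O2 where "O2 = W \<union> {p \<in> S. \<not> (\<exists>D\<in>M. D \<subseteq> fst p \<and> \<not> C1 \<subseteq> D)}"
    have o1: "sigma_open H A O1" unfolding O1_def S_def
      by (rule open_fst[OF Wo]) blast
    have o2: "sigma_open H A O2" unfolding O2_def S_def
      by (rule open_fst[OF Wo]) blast
    have cov: "F \<subseteq> (S - O1) \<union> (S - O2)"
    proof
      fix p assume pF: "p \<in> F"
      then have "p \<in> S" "p \<notin> W" using FS W_def by auto
      moreover have "fst p \<in> M" using pF unfolding M_def by blast
      ultimately show "p \<in> (S - O1) \<union> (S - O2)" unfolding O1_def O2_def by blast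
    qed
    have "F \<subseteq> S - O1 \<or> F \<subseteq> S - O2" using irr[OF clO[OF o1] clO[OF o2] cov] .
    moreover have "\<not> F \<subseteq> S - O2"
    proof
      assume "F \<subseteq> S - O2"
      then have "(C1, lam) \<notin> O2" using C1F by blast
      then have "\<exists>D\<in>M. D \<subseteq> C1 \<and> \<not> C1 \<subseteq> D" using C1F FS unfolding O2_def by auto
      then show False using C1min by blast
    qed
    ultimately have "F \<subseteq> S - O1" by blast
    then have "\<And>p. p \<in> F \<Longrightarrow> p \<in> S \<and> \<not> (p \<in> S \<and> \<not> C1 \<subseteq> fst p)" unfolding O1_def by blast
    then show "\<And>E \<mu>. (E, \<mu>) \<in> F \<Longrightarrow> C1 \<subseteq> E" by fastforce
  qed
  have openU: "sigma_open H A (W \<union> {p \<in> S. C1 \<subseteq> fst p \<and> restrict (snd p) C1 \<in> U})"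
    if U: "openin (gelfand_top H C1) U" for U
  proof (rule sigma_openI)
    show "W \<union> {p \<in> S. C1 \<subseteq> fst p \<and> restrict (snd p) C1 \<in> U} \<subseteq> Sigma_set H A"
      using WS S_def by auto
  next
    fix C assume C: "C \<in> VA H A"
    have "openin (gelfand_top H C) (slice {p \<in> S. C1 \<subseteq> fst p \<and> restrict (snd p) C1 \<in> U} C)"
    proof (cases "C1 \<subseteq> C")
      case True
      have "slice {p \<in> S. C1 \<subseteq> fst p \<and> restrict (snd p) C1 \<in> U} C =
          {x \<in> topspace (gelfand_top H C). restrict x C1 \<in> U}"
        using True C by (auto simp: slice_def memS)
      then show ?thesis
        using openin_continuous_map_preimage[OF cont_restrict[OF C1V True] U] by simp
    next
      case False
      then have "slice {p \<in> S. C1 \<subseteq> fst p \<and> restrict (snd p) C1 \<in> U} C = {}"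
        by (auto simp: slice_def)
      then show ?thesis by simp
    qed
    then show "openin (gelfand_top H C) (slice (W \<union> {p \<in> S. C1 \<subseteq> fst p \<and> restrict (snd p) C1 \<in> U}) C)"
      unfolding slice_Un using sigma_openD(2)[OF Wo C] by (rule openin_Un[rotated])
  next
    fix C l D assume Cl: "(C, l) \<in> W \<union> {p \<in> S. C1 \<subseteq> fst p \<and> restrict (snd p) C1 \<in> U}"
      and D: "D \<in> VA H A" "D \<subseteq> C"
    show "(D, restrict l D) \<in> W \<union> {p \<in> S. C1 \<subseteq> fst p \<and> restrict (snd p) C1 \<in> U}"
    proof (cases "(C, l) \<in> W")
      case True
      show ?thesis by (rule UnI1) (rule sigma_openD(3)[OF Wo True D])
    next
      case False
      then have CS: "(C, l) \<in> S" and sub: "C1 \<subseteq> C" and inU: "restrict l C1 \<in> U"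
        using Cl by auto
      have lC: "l \<in> gelfand H C" using CS memS by blast
      have DS: "(D, restrict l D) \<in> S" using memS D restrict_gelfand[OF D(1) lC D(2)] by blast
      show ?thesis
      proof (cases "C1 \<subseteq> D")
        case True
        then have "restrict (restrict l D) C1 = restrict l C1" by (simp add: Int_absorb1)
        then show ?thesis using DS True inU by auto
      next
        case False
        then have "(D, restrict l D) \<notin> F" using stepA by blast
        then have "(D, restrict l D) \<in> W" using DS W_def by blast
        then show ?thesis by (rule UnI1)
      qed
    qed
  qed
  have stepB: "\<And>E \<mu>. (E, \<mu>) \<in> F \<Longrightarrow> restrict \<mu> C1 = lam"
  proof (rule ccontr)
    fix E \<mu> assume EF: "(E, \<mu>) \<in> F" and ne: "restrict \<mu> C1 \<noteq> lam"
    have sub: "C1 \<subseteq> E" using stepA EF by blast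
    have muG: "\<mu> \<in> gelfand H E" using EF FS memS by blast
    have l'G: "restrict \<mu> C1 \<in> gelfand H C1" using restrict_gelfand[OF C1V muG sub] .
    obtain U1 U2 where U: "openin (gelfand_top H C1) U1" "openin (gelfand_top H C1) U2"
      "restrict \<mu> C1 \<in> U1" "lam \<in> U2" "disjnt U1 U2"
      using Hausdorff_gelfand[of C1, unfolded Hausdorff_space_def topspace_gelfand, rule_format,
          OF conjI[OF l'G conjI[OF lamG ne]]] by (elim exE conjE) blast
    define O1 where "O1 = W \<union> {p \<in> S. C1 \<subseteq> fst p \<and> restrict (snd p) C1 \<in> U1}"
    define O2 where "O2 = W \<union> {p \<in> S. C1 \<subseteq> fst p \<and> restrict (snd p) C1 \<in> U2}"
    have o1: "sigma_open H A O1" unfolding O1_def by (rule openU[OF U(1)])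
    have o2: "sigma_open H A O2" unfolding O2_def by (rule openU[OF U(2)])
    have cov: "F \<subseteq> (S - O1) \<union> (S - O2)"
    proof
      fix p assume pF: "p \<in> F"
      then have "p \<in> S" "p \<notin> W" using FS W_def by auto
      moreover have "\<not> (restrict (snd p) C1 \<in> U1 \<and> restrict (snd p) C1 \<in> U2)"
        using U(5) unfolding disjnt_def by blast
      ultimately show "p \<in> (S - O1) \<union> (S - O2)" unfolding O1_def O2_def by blast
    qed
    have "F \<subseteq> S - O1 \<or> F \<subseteq> S - O2" using irr[OF clO[OF o1] clO[OF o2] cov] .
    moreover have "(E, \<mu>) \<in> O1" unfolding O1_def using EF FS sub U(3) by auto
    moreover have "restrict lam C1 = lam" using lamG gelfand_ext extensional_restrict by blast
    then have "(C1, lam) \<in> O2" unfolding O2_def using C1F FS U(4) by auto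
    ultimately show False using EF C1F by blast
  qed
  have clos: "F = X closure_of {(C1, lam)}"
  proof
    show "X closure_of {(C1, lam)} \<subseteq> F"
      using closure_of_minimal[of "{(C1, lam)}" F X] C1F Fc X_def by blast
    show "F \<subseteq> X closure_of {(C1, lam)}"
    proof
      fix p assume pF: "p \<in> F"
      obtain E \<mu> where p: "p = (E, \<mu>)" by fastforce
      have "p \<in> topspace X" using pF FS topspace_Sigma_star X_def S_def by blast
      moreover have "(C1, lam) \<in> T" if "p \<in> T" "openin X T" for T
      proof -
        have "(C1, restrict \<mu> C1) \<in> T"
          using sigma_openD(3)[of H A T E \<mu> C1] that openin_Sigma_star X_def p C1V stepA pF by blast
        then show ?thesis using stepB pF p by simp
      qed
      ultimately show "p \<in> X closure_of {(C1, lam)}" unfolding in_closure_of by blast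
    qed
  qed
  show "\<exists>!x. x \<in> topspace (Sigma_star H A) \<and> F = Sigma_star H A closure_of {x}"
    unfolding X_def[symmetric]
  proof (rule ex1I[of _ "(C1, lam)"])
    show "(C1, lam) \<in> topspace X \<and> F = X closure_of {(C1, lam)}"
      using clos C1F FS topspace_Sigma_star X_def S_def by blast
  next
    fix y assume y: "y \<in> topspace X \<and> F = X closure_of {y}"
    obtain D m where yp: "y = (D, m)" by fastforce
    have yF: "y \<in> F" using y closure_of_subset[of "{y}" X] by blast
    have "C1 \<subseteq> D" using stepA yF yp by blast
    have rm: "restrict m C1 = lam" using stepB yF yp by blast
    define T where "T = {} \<union> {p \<in> Sigma_set H A. fst p \<subseteq> C1}"
    have To: "openin X T" unfolding T_def X_def openin_Sigma_star
      by (rule open_fst[OF sigma_open_empty]) blast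
    have "(C1, lam) \<in> X closure_of {y}" using y C1F by blast
    moreover have "(C1, lam) \<in> T" unfolding T_def using C1F FS S_def by auto
    ultimately have "y \<in> T" using To unfolding in_closure_of by blast
    then have "D \<subseteq> C1" unfolding T_def yp by simp
    then have DC: "D = C1" using \<open>C1 \<subseteq> D\<close> by blast
    have "m \<in> gelfand H D" using yF yp FS memS by blast
    then have "restrict m D = m" using gelfand_ext extensional_restrict by blast
    then show "y = (C1, lam)" using yp DC rm by simp
  qed
qed

end



interpretation cv: vector_space "\<lambda>(c::complex) (f::'b \<Rightarrow> complex). (\<lambda>x. c * f x)"
  by unfold_locales (auto simp: fun_eq_iff algebra_simps)

context vector_space
begin

lemma dim_mono_span:
  assumes "S \<subseteq> T" "T \<subseteq> span W" "finite W"
  shows "dim S \<le> dim T"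
proof -
  obtain BT where BT: "BT \<subseteq> T" "independent BT" "T \<subseteq> span BT" "card BT = dim T"
    using basis_exists[of T] by metis
  have fBT: "finite BT" using independent_span_bound[OF assms(3) BT(2)] BT(1) assms(2) by blast
  have "dim S \<le> card BT" using dim_le_card[of S BT] assms(1) BT(3) fBT by blast
  then show ?thesis using BT(4) by simp
qed

lemma dim_eq_span:
  assumes "subspace S" "S \<subseteq> T" "T \<subseteq> span W" "finite W" "dim T \<le> dim S"
  shows "S = T"
proof -
  obtain B where B: "B \<subseteq> S" "independent B" "S \<subseteq> span B" "card B = dim S"
    using basis_exists[of S] by metis
  have fB: "finite B" using independent_span_bound[OF assms(4) B(2)] B(1) assms(2,3) by blast
  have spB: "span B \<subseteq> S" using span_minimal[OF B(1) assms(1)] .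
  show ?thesis
  proof (rule ccontr)
    assume "S \<noteq> T"
    then obtain t where t: "t \<in> T" "t \<notin> S" using assms(2) by blast
    then have tB: "t \<notin> span B" using spB by blast
    then have ind: "independent (insert t B)" using independent_insertI B(2) by blast
    have "t \<notin> B" using tB span_superset by blast
    then have c: "card (insert t B) = Suc (card B)" using fB by simp
    have "dim (insert t B) \<le> dim T"
      using dim_mono_span[of "insert t B" T W] t(1) B(1) assms(2,3,4) by blast
    moreover have "dim (insert t B) = card (insert t B)" using dim_eq_card_independent[OF ind] .
    ultimately show False using c B(4) assms(5) by simp
  qed
qed

end

definition phi :: "'h hspace \<Rightarrow> ('h \<Rightarrow> 'h) list \<Rightarrow> (('h \<Rightarrow> 'h) \<Rightarrow> complex) \<Rightarrow> ('h \<Rightarrow> 'h)" where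
  "phi H bs c = foldr (\<lambda>b T. opadd H (opscale H (c b) b) T) bs (\<lambda>x. hzero H)"

lemma phi_Nil[simp]: "phi H [] c = (\<lambda>x. hzero H)" by (simp add: phi_def)
lemma phi_Cons[simp]: "phi H (b # bs) c = opadd H (opscale H (c b) b) (phi H bs c)"
  by (simp add: phi_def)

lemma sum_fun_apply: "finite B \<Longrightarrow> (\<Sum>b\<in>B. f b) x = (\<Sum>b\<in>B. f b x)"
  by (induction B rule: finite_induct) auto

context hil
begin

lemma opadd_comm: "opadd H S T = opadd H T S"
  unfolding opadd_def by (simp add: fun_eq_iff hadd_comm)

lemma opadd_swap: "opadd H (opadd H a b) (opadd H c d) = opadd H (opadd H a c) (opadd H b d)"
  unfolding opadd_def fun_eq_iff by (metis hadd_assoc hadd_comm)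

lemma phi_add: "phi H bs (c + d) = opadd H (phi H bs c) (phi H bs d)"
proof (induction bs)
  case Nil then show ?case by (simp add: opadd_def)
next
  case (Cons b bs)
  have "opscale H ((c + d) b) b = opadd H (opscale H (c b) b) (opscale H (d b) b)"
    by (simp add: opscale_def opadd_def fun_eq_iff hscale_addl)
  then show ?case using Cons by (simp add: opadd_swap)
qed

lemma phi_scale: "phi H bs (\<lambda>x. a * c x) = opscale H a (phi H bs c)"
proof (induction bs)
  case Nil then show ?case by (simp add: opscale_def)
next
  case (Cons b bs)
  then show ?case by (simp add: opscale_def opadd_def fun_eq_iff hscale_addr hscale_mult)
qed

lemma phi_zero: "phi H bs (\<lambda>x. 0) = (\<lambda>x. hzero H)"
  using phi_scale[of bs 0 "\<lambda>x. 0"] by (simp add: opscale_def)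

lemma phi_cong: "(\<And>x. x \<in> set bs \<Longrightarrow> c x = d x) \<Longrightarrow> phi H bs c = phi H bs d"
  by (induction bs) auto

lemma phi_delta:
  assumes "distinct bs" "b \<in> set bs"
  shows "phi H bs (\<lambda>x. if x = b then 1 else 0) = b"
  using assms
proof (induction bs)
  case Nil then show ?case by simp
next
  case (Cons b' bs)
  show ?case
  proof (cases "b' = b")
    case True
    then have "b \<notin> set bs" using Cons by simp
    then have "phi H bs (\<lambda>x. if x = b then 1 else 0) = phi H bs (\<lambda>x. 0)"
      by (intro phi_cong) auto
    then show ?thesis using True by (simp add: phi_zero opadd_def opscale_def)
  next
    case False
    then have "phi H bs (\<lambda>x. if x = b then 1 else 0) = b" using Cons by simp
    then show ?thesis using False by (simp add: opadd_def opscale_def)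
  qed
qed

lemma cspan_phi:
  assumes "T \<in> cspan H B" "distinct bs" "set bs = B"
  shows "\<exists>c. (\<forall>x. x \<notin> B \<longrightarrow> c x = 0) \<and> phi H bs c = T"
  using assms(1)
proof (induction rule: cspan.induct)
  case zero
  show ?case by (rule exI[of _ "\<lambda>x. 0"]) (simp add: phi_zero)
next
  case (step b T a)
  then obtain d where d: "\<forall>x. x \<notin> B \<longrightarrow> d x = 0" "phi H bs d = T" by blast
  define c where "c = d + (\<lambda>x. a * (if x = b then 1 else 0))"
  have "phi H bs c = opadd H T (opscale H a b)"
    unfolding c_def phi_add phi_scale using phi_delta[of bs b] assms(2,3) step(1) d(2) by simp
  moreover have "\<forall>x. x \<notin> B \<longrightarrow> c x = 0" using d(1) step(1) by (auto simp: c_def)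
  ultimately show ?case by (metis opadd_comm)
qed

lemma fd_dcc:
  assumes vna: "von_neumann_algebra H A" and fd: "finite_dimensional H A"
  shows "dcc_VA H A"
  unfolding dcc_VA_def
proof (intro allI impI)
  fix Cs :: "nat \<Rightarrow> ('h \<Rightarrow> 'h) set"
  assume Cs: "\<forall>n. Cs n \<in> VA H A \<and> Cs (Suc n) \<subseteq> Cs n"
  obtain B where B: "finite B" "B \<subseteq> A" "A \<subseteq> cspan H B" using fd unfolding finite_dimensional_def by blast
  obtain bs where bs: "distinct bs" "set bs = B" using finite_distinct_list[OF B(1)] by blast
  define V where "V = {c :: ('h \<Rightarrow> 'h) \<Rightarrow> complex. \<forall>x. x \<notin> B \<longrightarrow> c x = 0}"
  define dl where "dl b = (\<lambda>x. if x = b then (1::complex) else 0)" for b :: "'h \<Rightarrow> 'h"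
  define Wb where "Wb = dl ` B"
  have fW: "finite Wb" unfolding Wb_def using B(1) by simp
  have VW: "V \<subseteq> cv.span Wb"
  proof
    fix c assume c: "c \<in> V"
    have "c = (\<Sum>b\<in>B. (\<lambda>x. c b * dl b x))"
    proof
      fix x
      show "c x = (\<Sum>b\<in>B. (\<lambda>x. c b * dl b x)) x"
      proof -
        have "(\<Sum>b\<in>B. c b * dl b x) = (\<Sum>b\<in>B. if x = b then c x else 0)"
          by (rule sum.cong) (auto simp: dl_def)
        also have "\<dots> = (if x \<in> B then c x else 0)" using B(1) by (simp add: sum.delta)
        also have "\<dots> = c x" using c by (auto simp: V_def)
        finally show ?thesis unfolding sum_fun_apply[OF B(1)] by simp
      qed
    qed
    moreover have "(\<Sum>b\<in>B. (\<lambda>x. c b * dl b x)) \<in> cv.span Wb"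
      by (rule cv.span_sum, rule cv.span_scale, rule cv.span_base) (auto simp: Wb_def)
    ultimately show "c \<in> cv.span Wb" by simp
  qed
  define Q where "Q n = {c \<in> V. phi H bs c \<in> Cs n}" for n
  have vnaC: "von_neumann_algebra H (Cs n)" for n using Cs unfolding VA_def by blast
  have subQ: "cv.subspace (Q n)" for n
    unfolding cv.subspace_def
  proof (intro conjI ballI allI)
    show "0 \<in> Q n" unfolding Q_def V_def using phi_zero vna_closed(4)[OF vnaC]
      by (simp add: zero_fun_def)
    fix x y assume "x \<in> Q n" "y \<in> Q n"
    then show "x + y \<in> Q n" unfolding Q_def V_def using vna_closed(1)[OF vnaC] by (auto simp: phi_add)
  next
    fix a x assume "x \<in> Q n"
    then show "(\<lambda>y. a * x y) \<in> Q n" unfolding Q_def V_def using vna_closed(2)[OF vnaC] by (auto simp: phi_scale)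
  qed
  have QW: "Q n \<subseteq> cv.span Wb" for n using VW unfolding Q_def by blast
  have Qdec: "Q (Suc n) \<subseteq> Q n" for n using Cs unfolding Q_def by blast
  define d where "d n = cv.dim (Q n)" for n
  have ddec: "d (Suc n) \<le> d n" for n
    unfolding d_def using cv.dim_mono_span[OF Qdec QW fW] .
  obtain N where N: "\<forall>n. d N \<le> d n" using ex_has_least_nat[of "\<lambda>_. True" 0 d] by blast
  have "Cs n = Cs N" if "n \<ge> N" for n
  proof -
    have CsnN: "Cs n \<subseteq> Cs N" using lift_Suc_antimono_le[of Cs, OF _ that] Cs by blast
    have QnN: "Q n \<subseteq> Q N" using lift_Suc_antimono_le[of Q, OF Qdec that] .
    have "d N \<le> d n" using N by blast
    then have QeqN: "Q n = Q N"
      using cv.dim_eq_span[OF subQ QnN QW fW] unfolding d_def by blast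
    have "Cs N \<subseteq> Cs n"
    proof
      fix T assume T: "T \<in> Cs N"
      then have "T \<in> A" using Cs unfolding VA_def by blast
      then have "T \<in> cspan H B" using B(3) by blast
      then obtain c where c: "\<forall>x. x \<notin> B \<longrightarrow> c x = 0" "phi H bs c = T"
        using cspan_phi[OF _ bs] by blast
      then have "c \<in> Q N" using T unfolding Q_def V_def by blast
      then have "c \<in> Q n" using QeqN by blast
      then show "T \<in> Cs n" using c(2) unfolding Q_def by blast
    qed
    then show ?thesis using CsnN by blast
  qed
  then show "\<exists>N. \<forall>n\<ge>N. Cs n = Cs N" by blast
qed

end


theorem proposition2p27:
  fixes H :: "'h hspace" and A :: "('h \<Rightarrow> 'h) set"
  assumes "chilbert H" and "von_neumann_algebra H A"
  shows "(dcc_VA H A \<longrightarrow> sober (Sigma_star H A)) \<and>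
         (finite_dimensional H A \<longrightarrow> sober (Sigma_star H A))"
proof -
  interpret hil H by unfold_locales (rule assms(1))
  have s: "sober (Sigma_star H A)" if "dcc_VA H A"
    using sober_min[OF dcc_min[OF that]] by blast
  show ?thesis using s fd_dcc[OF assms(2)] by blast
qed

end
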